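(* Let $k$ be a positive integer and $\mathbf a\in\mathscr S_k$. Then: (i) if $\mathcal s(\mathbf a)\ge0$ and $\epsilon$ is a real number with $0\le\epsilon\le\mathcal s(\mathbf a)$, then for every positive integer $m\le k$ the matrix $\mathbf a-\epsilon\mathbf e_m$ is formally positive semi-definite; (ii) if $\mathcal s(\mathbf a)\ge0$, then $\mathbf a$ is formally positive semi-definite; (iii) if $\mathcal s(\mathbf a)>0$, then for every positive integer $m$ there exists $\epsilon_m>0$ such that $\mathcal s(\mathbf a-\epsilon_m\mathbf e_m)>0$, and in this case $\mathbf a-\epsilon_m\mathbf e_m$ is formally positive semi-definite.
   Context: Class $\mathscr S_k$: given a $k\times k$ complex matrix $\mathbf b$, complex numbers $c_{k+1},c_{k+2},\dots$ and positive reals $d_{k+1},d_{k+2},\dots$, let $\mathbf a=(a_{m,n})_{m,n\ge1}=\begin{pmatrix}\mathbf b&\mathbf c\\\mathbf c^*&\mathbf d\end{pmatrix}$, where $\mathbf c$ is the $k\times\infty$ matrix all of whose rows equal $(c_{k+1},c_{k+2},\dots)$ and $\mathbf d=\mathrm{diag}(d_{k+1},d_{k+2},\dots)$. Then $\mathbf a\in\mathscr S_k$ if $\mathbf b$ is positive semi-definite and $\sum_{l\ge1}|c_{k+l}|^2/d_{k+l}<\infty$, and $\mathcal s(\mathbf a)=\lambda_{\min}(\mathbf b)-k\sum_{l\ge1}|c_{k+l}|^2/d_{k+l}$, where $\lambda_{\min}$ is the minimal eigenvalue (for a matrix of the same block form, $\mathcal s$ is defined by the same formula). $\mathbf e_m$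 is the infinite matrix with entry $1$ at position $(m,m)$ and $0$ elsewhere. An infinite matrix is formally positive semi-definite if all its finite sections $(x_{p,q})_{p,q\in F}$, $F\subset\mathbb N$ finite, are positive semi-definite. *)

theory Defs
  imports Complex_Main "Jordan_Normal_Form.Char_Poly"
begin

text \<open>Infinite matrices indexed by positive integers are modelled as functions
  nat => nat => complex; the entries with an index 0 are junk and never used.\<close>

type_synonym imat = "nat \<Rightarrow> nat \<Rightarrow> complex"

definition psd_on :: "nat set \<Rightarrow> imat \<Rightarrow> bool" where
  "psd_on F x \<longleftrightarrow> (\<forall>v :: nat \<Rightarrow> complex.
      Im (\<Sum>p\<in>F. \<Sum>q\<in>F. cnj (v p) * x p q * v q) = 0 \<and>
      Re (\<Sum>p\<in>F. \<Sum>q\<in>F. cnj (v p) * x p q * v q) \<ge> 0)"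

definition formally_psd :: "imat \<Rightarrow> bool" where
  "formally_psd x \<longleftrightarrow> (\<forall>F. finite F \<and> F \<subseteq> {1..} \<longrightarrow> psd_on F x)"

definition blockmat :: "nat \<Rightarrow> imat \<Rightarrow> (nat \<Rightarrow> complex) \<Rightarrow> (nat \<Rightarrow> real) \<Rightarrow> imat" where
  "blockmat k b c d = (\<lambda>m n.
     if m = 0 \<or> n = 0 then 0
     else if m \<le> k \<and> n \<le> k then b m n
     else if m \<le> k then c n
     else if n \<le> k then cnj (c m)
     else if m = n then complex_of_real (d m) else 0)"

definition in_S :: "nat \<Rightarrow> imat \<Rightarrow> bool" where
  "in_S k a \<longleftrightarrow> (\<exists>b c d.
     psd_on {1..k} b \<and>
     (\<forall>l\<ge>1. d (k + l) > 0) \<and>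
     summable (\<lambda>l. (cmod (c (k + l + 1)))\<^sup>2 / d (k + l + 1)) \<and>
     a = blockmat k b c d)"

text \<open>Minimal (real) eigenvalue of a square matrix (used for Hermitian matrices,
  whose eigenvalues are all real).\<close>
definition lambda_min :: "complex mat \<Rightarrow> real" where
  "lambda_min B = Min {x::real. eigenvalue B (complex_of_real x)}"

definition upper_block :: "nat \<Rightarrow> imat \<Rightarrow> complex mat" where
  "upper_block k x = mat k k (\<lambda>(i, j). x (i + 1) (j + 1))"

text \<open>s(x) for a matrix of the block form: c is read off from row 1, d from the diagonal.\<close>
definition s_val :: "nat \<Rightarrow> imat \<Rightarrow> real" where
  "s_val k x = lambda_min (upper_block k x)
     - real k * (\<Sum>l. (cmod (x 1 (k + l + 1)))\<^sup>2 / Re (x (k + l + 1) (k + l + 1)))"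

definition e_unit :: "nat \<Rightarrow> imat" where
  "e_unit m = (\<lambda>i j. if i = m \<and> j = m then 1 else 0)"

definition minus_eps_e :: "imat \<Rightarrow> real \<Rightarrow> nat \<Rightarrow> imat" where
  "minus_eps_e a \<epsilon> m = (\<lambda>i j. a i j - complex_of_real \<epsilon> * e_unit m i j)"

end

theory Submission imports Defs "HOL-Analysis.Analysis" begin

definition Qf :: "nat set \<Rightarrow> imat \<Rightarrow> (nat \<Rightarrow> complex) \<Rightarrow> complex" where
  "Qf F x v = (\<Sum>p\<in>F. \<Sum>q\<in>F. cnj (v p) * x p q * v q)"

definition nrm :: "nat set \<Rightarrow> (nat \<Rightarrow> complex) \<Rightarrow> real" where
  "nrm F v = (\<Sum>p\<in>F. (cmod (v p))\<^sup>2)"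

lemma nrm_nonneg: "0 \<le> nrm F v"
  unfolding nrm_def by (simp add: sum_nonneg)

lemma nrm_scale: "nrm F (\<lambda>p. c * v p) = (cmod c)\<^sup>2 * nrm F v"
  unfolding nrm_def by (simp add: norm_mult power_mult_distrib sum_distrib_left)

lemma Qf_scale: "Qf F x (\<lambda>p. c * v p) = complex_of_real ((cmod c)\<^sup>2) * Qf F x v"
proof -
  have "cnj c * c = complex_of_real ((cmod c)\<^sup>2)"
    using complex_norm_square mult.commute by (metis complex_mult_cnj)
  then show ?thesis
    unfolding Qf_def sum_distrib_left
    by (intro sum.cong refl) (simp add: algebra_simps)
qed

lemma nrm_zero: "finite F \<Longrightarrow> nrm F v = 0 \<Longrightarrow> p \<in> F \<Longrightarrow> v p = 0"
  unfolding nrm_def by (simp add: sum_nonneg_eq_0_iff)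

lemma Qf_zero: "(\<forall>p\<in>F. v p = 0) \<Longrightarrow> Qf F x v = 0"
  unfolding Qf_def by simp

lemma Qf_bound:
  assumes "\<forall>p\<in>F. cmod (v p) \<le> 1"
  shows "cmod (Qf F x v) \<le> (\<Sum>p\<in>F. \<Sum>q\<in>F. cmod (x p q))"
proof -
  have "cmod (Qf F x v) \<le> (\<Sum>p\<in>F. cmod (\<Sum>q\<in>F. cnj (v p) * x p q * v q))"
    unfolding Qf_def by (rule norm_sum)
  also have "\<dots> \<le> (\<Sum>p\<in>F. \<Sum>q\<in>F. cmod (cnj (v p) * x p q * v q))"
    by (intro sum_mono norm_sum)
  also have "\<dots> \<le> (\<Sum>p\<in>F. \<Sum>q\<in>F. cmod (x p q))"
  proof (intro sum_mono)
    fix p q assume p: "p \<in> F" and q: "q \<in> F"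
    have "cmod (cnj (v p) * x p q * v q) = cmod (v p) * cmod (x p q) * cmod (v q)"
      by (simp add: norm_mult)
    also have "\<dots> \<le> 1 * cmod (x p q) * 1"
      using assms p q by (intro mult_mono) auto
    finally show "cmod (cnj (v p) * x p q * v q) \<le> cmod (x p q)" by simp
  qed
  finally show ?thesis .
qed

lemma minimizer:
  assumes fin: "finite F" and ne: "F \<noteq> {}"
  shows "\<exists>l \<mu>. nrm F l = 1 \<and> Re (Qf F x l) = \<mu> \<and> (\<forall>v. \<mu> * nrm F v \<le> Re (Qf F x v))"
proof -
  define U where "U = {v. nrm F v = 1}"
  define f where "f v = Re (Qf F x v)" for v
  define M where "M = (\<Sum>p\<in>F. \<Sum>q\<in>F. cmod (x p q))"
  obtain p0 where p0: "p0 \<in> F" using ne by auto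
  have eq1: "(cmod (if p = p0 then (1::complex) else 0))\<^sup>2 = (if p = p0 then 1 else 0)" for p
    by simp
  have U_ne: "(\<lambda>p. if p = p0 then 1 else 0) \<in> U"
    unfolding U_def nrm_def using fin p0 by (simp only: eq1 mem_Collect_eq sum.delta) simp
  have Ule1: "cmod (v p) \<le> 1" if "v \<in> U" "p \<in> F" for v p
  proof -
    have "(cmod (v p))\<^sup>2 \<le> nrm F v"
      unfolding nrm_def using fin that(2) by (intro member_le_sum) auto
    then have "(cmod (v p))\<^sup>2 \<le> 1" using that(1) by (simp add: U_def)
    then show ?thesis by (simp add: power_le_one_iff)
  qed
  have fb: "- M \<le> f v" if "v \<in> U" for v
  proof -
    have "cmod (Qf F x v) \<le> M" unfolding M_def using Ule1[OF that] by (intro Qf_bound) auto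
    moreover have "- cmod (Qf F x v) \<le> f v" unfolding f_def using abs_Re_le_cmod[of "Qf F x v"] by linarith
    ultimately show ?thesis by linarith
  qed
  define \<mu> where "\<mu> = Inf (f ` U)"
  have bdd: "bdd_below (f ` U)" using fb by (intro bdd_belowI[of _ "-M"]) auto
  have \<mu>le: "\<mu> \<le> f v" if "v \<in> U" for v
    unfolding \<mu>_def using bdd that by (intro cInf_lower) auto
  have "\<exists>v\<in>U. f v < \<mu> + inverse (real (Suc n))" for n
  proof -
    have "Inf (f ` U) < \<mu> + inverse (real (Suc n))" unfolding \<mu>_def by simp
    then obtain y where "y \<in> f ` U" "y < \<mu> + inverse (real (Suc n))"
      using cInf_lessD[of "f ` U"] U_ne by blast
    then show ?thesis by auto
  qed
  then obtain s where s: "\<And>n. s n \<in> U" "\<And>n. f (s n) < \<mu> + inverse (real (Suc n))"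
    by metis
  have bnd: "bounded ((\<lambda>v. v i) ` range s)" if "i \<in> F" for i
    unfolding bounded_iff using Ule1[OF s(1) that] by auto
  have "\<forall>\<delta>\<subseteq>F. \<exists>l::nat\<Rightarrow>complex. \<exists>r::nat\<Rightarrow>nat. strict_mono r \<and>
      (\<forall>e>0. eventually (\<lambda>n. \<forall>i\<in>\<delta>. dist (s (r n) i) (l i) < e) sequentially)"
    by (rule compact_lemma_general[where proj="\<lambda>v i. v i" and unproj="\<lambda>v. v"])
      (use fin bnd in auto)
  then obtain l :: "nat \<Rightarrow> complex" and r :: "nat \<Rightarrow> nat" where r: "strict_mono r"
    and lconv: "\<forall>e>0. eventually (\<lambda>n. \<forall>i\<in>F. dist (s (r n) i) (l i) < e) sequentially"
    by blast
  have conv: "(\<lambda>n. s (r n) i) \<longlonglongrightarrow> l i" if "i \<in> F" for i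
    unfolding tendsto_iff
  proof (intro allI impI)
    fix e :: real assume "e > 0"
    then have "eventually (\<lambda>n. \<forall>i\<in>F. dist (s (r n) i) (l i) < e) sequentially"
      using lconv by blast
    then show "eventually (\<lambda>n. dist (s (r n) i) (l i) < e) sequentially"
      by (rule eventually_mono) (use that in blast)
  qed
  have "(\<lambda>n. nrm F (s (r n))) \<longlonglongrightarrow> nrm F l"
    unfolding nrm_def by (intro tendsto_sum tendsto_power tendsto_norm conv)
  moreover have "(\<lambda>n. nrm F (s (r n))) = (\<lambda>n. 1)" using s(1) by (simp add: U_def)
  ultimately have nl: "nrm F l = 1" using LIMSEQ_unique tendsto_const by metis
  have "(\<lambda>n. f (s (r n))) \<longlonglongrightarrow> f l"
    unfolding f_def Qf_def by (intro tendsto_Re tendsto_sum tendsto_mult tendsto_cnj tendsto_const conv)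
  moreover have "(\<lambda>n. f (s (r n))) \<longlonglongrightarrow> \<mu>"
  proof (rule tendsto_sandwich[of "\<lambda>n. \<mu>" _ _ "\<lambda>n. \<mu> + inverse (real (Suc n))"])
    show "\<forall>\<^sub>F n in sequentially. \<mu> \<le> f (s (r n))" using \<mu>le s(1) by auto
    show "\<forall>\<^sub>F n in sequentially. f (s (r n)) \<le> \<mu> + inverse (real (Suc n))"
    proof (intro always_eventually allI)
      fix n
      have "n \<le> r n" using r by (simp add: seq_suble)
      then have "inverse (real (Suc (r n))) \<le> inverse (real (Suc n))"
        by (simp add: le_imp_inverse_le)
      then show "f (s (r n)) \<le> \<mu> + inverse (real (Suc n))" using s(2)[of "r n"] by linarith
    qed
    show "(\<lambda>n. \<mu>) \<longlonglongrightarrow> \<mu>" by simp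
    show "(\<lambda>n. \<mu> + inverse (real (Suc n))) \<longlonglongrightarrow> \<mu>"
      using LIMSEQ_inverse_real_of_nat_add by simp
  qed
  ultimately have fl: "f l = \<mu>" using LIMSEQ_unique by metis
  have all: "\<mu> * nrm F v \<le> Re (Qf F x v)" for v
  proof (cases "nrm F v = 0")
    case True
    then have "Qf F x v = 0" using nrm_zero[OF fin] by (intro Qf_zero) auto
    then show ?thesis using True by simp
  next
    case False
    then have pos: "nrm F v > 0" using nrm_nonneg[of F v] by linarith
    define t where "t = sqrt (nrm F v)"
    have t: "t > 0" "t\<^sup>2 = nrm F v" using pos by (auto simp: t_def)
    define w where "w = (\<lambda>p. complex_of_real (1/t) * v p)"
    have "nrm F w = (1/t)\<^sup>2 * nrm F v" unfolding w_def nrm_scale using t(1) False by (simp add: norm_divide)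
    also have "\<dots> = 1" using t(1) t(2)[symmetric] by (simp add: power_divide)
    finally have "w \<in> U" by (simp add: U_def)
    then have "\<mu> \<le> f w" by (rule \<mu>le)
    also have "f w = (1/t)\<^sup>2 * Re (Qf F x v)"
      unfolding f_def w_def Qf_scale using t(1) by (simp add: norm_divide)
    also have "\<dots> = Re (Qf F x v) / nrm F v" using t by (simp add: power_divide)
    finally show ?thesis using pos by (simp add: pos_le_divide_eq)
  qed
  show ?thesis using nl fl all unfolding f_def by blast
qed

lemma sum_1k_shift: "(\<Sum>q\<in>{1..k}. g q) = (\<Sum>j\<in>{0..<k}. g (Suc j))"
proof -
  have "{1..k} = {Suc 0..<Suc k}" by auto
  then show ?thesis using sum.shift_bounds_Suc_ivl[of g 0 k] by simp
qed

lemma quad0: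
  fixes a b :: real
  assumes b: "b \<ge> 0" and h: "\<forall>t. 0 \<le> a*t + b*t\<^sup>2"
  shows "a = 0"
proof -
  define c where "c = b + 1"
  have c: "c > 0" "b = c - 1" using b by (auto simp: c_def)
  have h1: "0 \<le> a * (-a/c) + (c - 1) * (-a/c)\<^sup>2" using h c by blast
  have h2: "a * (-a/c) + (c - 1) * (-a/c)\<^sup>2 = - (a\<^sup>2) / c\<^sup>2"
    using c by (simp add: field_simps power2_eq_square)
  from h1 h2 have h3: "0 \<le> - (a\<^sup>2) / c\<^sup>2" by linarith
  have "a\<^sup>2 / c\<^sup>2 = 0" using h3 by (intro antisym) simp_all
  then have "a\<^sup>2 \<le> 0" using c by simp
  then show ?thesis by simp
qed

lemma beta0:
  fixes \<alpha> \<beta> \<gamma> :: complex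
  assumes g1: "Im \<gamma> = 0" and g2: "Re \<gamma> \<ge> 0"
    and h: "\<forall>z. Im (z*\<alpha> + cnj z * \<beta> + cnj z * z * \<gamma>) = 0 \<and> 0 \<le> Re (z*\<alpha> + cnj z * \<beta> + cnj z * z * \<gamma>)"
  shows "\<beta> = 0"
proof -
  have "Im \<alpha> + Im \<beta> = 0" using h[rule_format, of 1] g1 by simp
  moreover have "Re \<alpha> - Re \<beta> = 0" using h[rule_format, of \<i>] g1 by simp
  moreover have "Re \<alpha> + Re \<beta> = 0"
  proof (rule quad0[OF g2], intro allI)
    fix t :: real
    show "0 \<le> (Re \<alpha> + Re \<beta>) * t + Re \<gamma> * t\<^sup>2"
      using h[rule_format, of "complex_of_real t"] g1
      by (simp add: algebra_simps power2_eq_square)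
  qed
  moreover have "Im \<beta> - Im \<alpha> = 0"
  proof (rule quad0[OF g2], intro allI)
    fix t :: real
    show "0 \<le> (Im \<beta> - Im \<alpha>) * t + Re \<gamma> * t\<^sup>2"
      using h[rule_format, of "Complex 0 t"] g1
      by (simp add: algebra_simps power2_eq_square)
  qed
  ultimately show ?thesis by (simp add: complex_eq_iff)
qed

lemma cnj_mult_self: "cnj a * a = complex_of_real ((cmod a)\<^sup>2)"
  by (metis complex_norm_square mult.commute complex_mult_cnj)

lemma Qf_rows: "Qf F x v = (\<Sum>p\<in>F. cnj (v p) * (\<Sum>q\<in>F. x p q * v q))"
  unfolding Qf_def by (simp add: sum_distrib_left mult.assoc)

lemma nrm_cplx: "complex_of_real (nrm F v) = (\<Sum>p\<in>F. cnj (v p) * v p)"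
  unfolding nrm_def by (simp add: cnj_mult_self)

lemma eigen_char:
  assumes k: "k \<ge> 1" and herm: "\<forall>v. Im (Qf {1..k} x v) = 0"
  shows "\<exists>l. nrm {1..k} l = 1 \<and> Re (Qf {1..k} x l) = lambda_min (upper_block k x)
          \<and> (\<forall>v. lambda_min (upper_block k x) * nrm {1..k} v \<le> Re (Qf {1..k} x v))"
proof -
  define F where "F = {1..k::nat}"
  have finF: "finite F" and neF: "F \<noteq> {}" using k by (auto simp: F_def)
  obtain l \<mu> where l1: "nrm F l = 1" and l2: "Re (Qf F x l) = \<mu>"
    and l3: "\<forall>v. \<mu> * nrm F v \<le> Re (Qf F x v)"
    using minimizer[OF finF neF, of x] by auto
  define P where "P p q = x p q - (if p = q then complex_of_real \<mu> else 0)" for p q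
  have inner: "(\<Sum>q\<in>F. P p q * v q) = (\<Sum>q\<in>F. x p q * v q) - complex_of_real \<mu> * v p"
    if "p \<in> F" for p v
  proof -
    have "\<And>q. P p q * v q = x p q * v q - (if p = q then complex_of_real \<mu> * v p else 0)"
      unfolding P_def by (auto simp: algebra_simps)
    then show ?thesis using that finF by (simp only: sum_subtractf sum.delta) simp
  qed
  have QP: "Qf F P v = Qf F x v - complex_of_real (\<mu> * nrm F v)" for v
  proof -
    have "Qf F P v = (\<Sum>p\<in>F. cnj (v p) * ((\<Sum>q\<in>F. x p q * v q) - complex_of_real \<mu> * v p))"
      unfolding Qf_rows by (intro sum.cong refl) (simp add: inner)
    also have "\<dots> = Qf F x v - complex_of_real \<mu> * (\<Sum>p\<in>F. cnj (v p) * v p)"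
      unfolding Qf_rows by (simp add: algebra_simps sum_subtractf sum_distrib_left)
    also have "\<dots> = Qf F x v - complex_of_real (\<mu> * nrm F v)"
      by (simp add: nrm_cplx[symmetric])
    finally show ?thesis .
  qed
  have Pnn: "0 \<le> Re (Qf F P v)" for v using QP[of v] l3 by simp
  have Pim: "Im (Qf F P v) = 0" for v using QP[of v] herm by (simp add: F_def)
  have Pl: "Qf F P l = 0" using QP[of l] l1 l2 herm by (simp add: complex_eq_iff F_def)
  define Bf where "Bf u w = (\<Sum>p\<in>F. \<Sum>q\<in>F. cnj (u p) * P p q * w q)" for u w
  have expand: "Qf F P (\<lambda>p. l p + z * w p) = Qf F P l + z * Bf l w + cnj z * Bf w l + cnj z * z * Qf F P w"
    for z w
  proof -
    have teq: "cnj (l p + z * w p) * P p q * (l q + z * w q) = cnj (l p) * P p q * l q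
        + z * (cnj (l p) * P p q * w q) + cnj z * (cnj (w p) * P p q * l q)
        + cnj z * z * (cnj (w p) * P p q * w q)" for p q
      by (simp add: algebra_simps)
    show ?thesis unfolding Qf_def Bf_def
      by (simp only: teq sum.distrib sum_distrib_left)
  qed
  have beta: "Bf w l = 0" for w
  proof (rule beta0[of "Qf F P w" "Bf l w"])
    show "Im (Qf F P w) = 0" by (rule Pim)
    show "0 \<le> Re (Qf F P w)" by (rule Pnn)
    show "\<forall>z. Im (z * Bf l w + cnj z * Bf w l + cnj z * z * Qf F P w) = 0 \<and>
          0 \<le> Re (z * Bf l w + cnj z * Bf w l + cnj z * z * Qf F P w)"
    proof
      fix z
      have "z * Bf l w + cnj z * Bf w l + cnj z * z * Qf F P w = Qf F P (\<lambda>p. l p + z * w p)"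
        using expand[of z w] Pl by simp
      then show "Im (z * Bf l w + cnj z * Bf w l + cnj z * z * Qf F P w) = 0 \<and>
          0 \<le> Re (z * Bf l w + cnj z * Bf w l + cnj z * z * Qf F P w)"
        using Pim Pnn by simp
    qed
  qed
  define wv where "wv p = (\<Sum>q\<in>F. P p q * l q)" for p
  have "Bf wv l = (\<Sum>p\<in>F. cnj (wv p) * wv p)"
    unfolding Bf_def wv_def by (simp add: sum_distrib_left mult.assoc)
  then have "complex_of_real (nrm F wv) = 0" using beta[of wv] nrm_cplx[of F wv] by simp
  then have wv0: "p \<in> F \<Longrightarrow> wv p = 0" for p using nrm_zero[OF finF] by simp
  have eigrow: "(\<Sum>q\<in>F. x p q * l q) = complex_of_real \<mu> * l p" if "p \<in> F" for p
    using wv0[OF that] inner[OF that, of l] unfolding wv_def by simp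
  define B where "B = upper_block k x"
  have Bc: "B \<in> carrier_mat k k" unfolding B_def upper_block_def by simp
  have Bidx: "B $$ (i,j) = x (Suc i) (Suc j)" if "i < k" "j < k" for i j
    unfolding B_def upper_block_def using that by simp
  have Bv: "(B *\<^sub>v v) $ i = (\<Sum>j\<in>{0..<k}. x (Suc i) (Suc j) * v $ j)"
    if "v \<in> carrier_vec k" "i < k" for v i
    using that Bc Bidx by (auto simp: scalar_prod_def intro!: sum.cong)
  have ev_mu: "eigenvalue B (complex_of_real \<mu>)"
    unfolding eigenvalue_def eigenvector_def
  proof (intro exI conjI)
    define vl where "vl = Matrix.vec k (\<lambda>i. l (Suc i))"
    show "vl \<in> carrier_vec (dim_row B)" using Bc by (simp add: vl_def)
    show "vl \<noteq> 0\<^sub>v (dim_row B)"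
    proof
      assume "vl = 0\<^sub>v (dim_row B)"
      then have z: "i < k \<Longrightarrow> l (Suc i) = 0" for i
        using Bc by (metis carrier_matD(1) index_vec index_zero_vec(1) vl_def)
      have "p \<in> F \<Longrightarrow> l p = 0" for p using z[of "p - 1"] by (auto simp: F_def)
      then have "nrm F l = 0" by (simp add: nrm_def)
      then show False using l1 by simp
    qed
    show "B *\<^sub>v vl = complex_of_real \<mu> \<cdot>\<^sub>v vl"
    proof (rule eq_vecI)
      show "dim_vec (B *\<^sub>v vl) = dim_vec (complex_of_real \<mu> \<cdot>\<^sub>v vl)" using Bc by (simp add: vl_def)
      fix i assume "i < dim_vec (complex_of_real \<mu> \<cdot>\<^sub>v vl)"
      then have i: "i < k" by (simp add: vl_def)
      have "(B *\<^sub>v vl) $ i = (\<Sum>j\<in>{0..<k}. x (Suc i) (Suc j) * l (Suc j))"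
        using Bv[of vl i] i by (simp add: vl_def)
      also have "\<dots> = (\<Sum>q\<in>F. x (Suc i) q * l q)"
        unfolding F_def by (rule sum_1k_shift[symmetric])
      also have "\<dots> = complex_of_real \<mu> * l (Suc i)" using eigrow[of "Suc i"] i by (simp add: F_def)
      finally show "(B *\<^sub>v vl) $ i = (complex_of_real \<mu> \<cdot>\<^sub>v vl) $ i" using i by (simp add: vl_def)
    qed
  qed
  have ev_ge: "\<mu> \<le> e" if ev: "eigenvalue B (complex_of_real e)" for e
  proof -
    obtain u where u1: "u \<in> carrier_vec k" and u2: "u \<noteq> 0\<^sub>v k"
      and u3: "B *\<^sub>v u = complex_of_real e \<cdot>\<^sub>v u"
      using ev Bc unfolding eigenvalue_def eigenvector_def by auto
    define v where "v p = (if p \<in> F then u $ (p - 1) else 0)" for p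
    have row: "(\<Sum>q\<in>F. x p q * v q) = complex_of_real e * v p" if "p \<in> F" for p
    proof -
      have p: "p - 1 < k" "Suc (p - 1) = p" using that by (auto simp: F_def)
      have "(\<Sum>q\<in>F. x p q * v q) = (\<Sum>j\<in>{0..<k}. x p (Suc j) * v (Suc j))"
        unfolding F_def by (rule sum_1k_shift)
      also have "\<dots> = (\<Sum>j\<in>{0..<k}. x (Suc (p - 1)) (Suc j) * u $ j)"
        using p by (intro sum.cong refl) (simp add: v_def F_def)
      also have "\<dots> = (B *\<^sub>v u) $ (p - 1)" using Bv[OF u1 p(1)] by simp
      also have "\<dots> = complex_of_real e * v p" using u3 u1 p that by (simp add: v_def)
      finally show ?thesis .
    qed
    have "Qf F x v = (\<Sum>p\<in>F. cnj (v p) * (complex_of_real e * v p))"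
      unfolding Qf_rows by (intro sum.cong refl) (simp add: row)
    also have "\<dots> = complex_of_real e * complex_of_real (nrm F v)"
      unfolding nrm_cplx by (simp add: sum_distrib_left algebra_simps)
    finally have Qv: "Re (Qf F x v) = e * nrm F v" by simp
    obtain i where i: "i < k" "u $ i \<noteq> 0"
      using u2 u1 by (metis carrier_vecD eq_vecI index_zero_vec(1) index_zero_vec(2))
    have "0 < (cmod (v (Suc i)))\<^sup>2" using i by (simp add: v_def F_def)
    also have "\<dots> \<le> nrm F v" unfolding nrm_def using i finF
      by (intro member_le_sum) (auto simp: F_def)
    finally have "0 < nrm F v" .
    moreover have "\<mu> * nrm F v \<le> e * nrm F v" using l3 Qv by metis
    ultimately show ?thesis by simp
  qed
  have "finite {z. eigenvalue B z}"
  proof -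
    have "char_poly B \<noteq> 0" using degree_monic_char_poly[OF Bc] by auto
    then have "finite {z. poly (char_poly B) z = 0}" by (rule poly_roots_finite)
    then show ?thesis using eigenvalue_root_char_poly[OF Bc] by simp
  qed
  then have fin: "finite {e::real. eigenvalue B (complex_of_real e)}"
    using finite_vimageI[of "{z. eigenvalue B z}" complex_of_real] by (simp add: inj_on_def)
  have "lambda_min B = \<mu>" unfolding lambda_min_def
    by (rule Min_eqI) (use fin ev_mu ev_ge in auto)
  then show ?thesis using l1 l2 l3 unfolding B_def F_def by auto
qed

lemma block_psd:
  fixes b :: imat and c :: "nat \<Rightarrow> complex" and d :: "nat \<Rightarrow> real"
  assumes dpos: "\<forall>l\<ge>1. d (k + l) > 0"
    and summ: "summable (\<lambda>l. (cmod (c (k + l + 1)))\<^sup>2 / d (k + l + 1))"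
    and bim: "\<forall>u. Im (Qf {1..k} b u) = 0"
    and bge: "\<forall>u. real k * (\<Sum>l. (cmod (c (k + l + 1)))\<^sup>2 / d (k + l + 1)) * nrm {1..k} u
                  \<le> Re (Qf {1..k} b u)"
  shows "formally_psd (blockmat k b c d)"
  unfolding formally_psd_def psd_on_def
proof (intro allI impI conjI)
  fix F :: "nat set" and v :: "nat \<Rightarrow> complex"
  assume FF: "finite F \<and> F \<subseteq> {1..}"
  then have finF: "finite F" and F1: "\<And>p. p \<in> F \<Longrightarrow> 1 \<le> p" by auto
  have F0: "0 \<notin> F" using F1 by force
  define g where "g l = (cmod (c (k + l + 1)))\<^sup>2 / d (k + l + 1)" for l
  define T where "T = (\<Sum>l. g l)"
  have dpos': "d p > 0" if "k < p" for p using dpos[rule_format, of "p - k"] that by simp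
  have gnn: "0 \<le> g l" for l unfolding g_def using dpos'[of "Suc (k + l)"] by simp
  have summ': "summable g" using summ by (simp add: g_def[abs_def])
  have Tnn: "0 \<le> T" unfolding T_def using summ' gnn by (simp add: suminf_nonneg)
  let ?x = "blockmat k b c d"
  define A1 where "A1 = {p\<in>F. p \<le> k}"
  define A2 where "A2 = {p\<in>F. k < p}"
  have finA: "finite A1" "finite A2" using finF by (auto simp: A1_def A2_def)
  have Fs: "F = A1 \<union> A2" "A1 \<inter> A2 = {}" by (auto simp: A1_def A2_def)
  define u where "u p = (if p \<in> F then v p else 0)" for p
  define S where "S = (\<Sum>p\<in>A1. cnj (v p))"
  define W where "W = (\<Sum>q\<in>A2. c q * v q)"
  define D where "D = (\<Sum>p\<in>A2. d p * (cmod (v p))\<^sup>2)"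
  define N where "N = nrm {1..k} u"
  have A1sub: "A1 \<subseteq> {1..k}" using F1 by (auto simp: A1_def)
  have restr: "(\<Sum>p\<in>{1..k}. h p) = (\<Sum>p\<in>A1. h' p)"
    if "\<And>p. p \<in> {1..k} \<Longrightarrow> p \<notin> F \<Longrightarrow> h p = 0" "\<And>p. p \<in> A1 \<Longrightarrow> h p = h' p"
    for h h' :: "nat \<Rightarrow> 'z::comm_monoid_add"
    by (rule sum.mono_neutral_cong_right) (use that A1sub in \<open>auto simp: A1_def\<close>)
  have Q11: "(\<Sum>p\<in>A1. \<Sum>q\<in>A1. cnj (v p) * ?x p q * v q) = Qf {1..k} b u"
  proof -
    have "Qf {1..k} b u = (\<Sum>p\<in>A1. \<Sum>q\<in>{1..k}. cnj (u p) * b p q * u q)"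
      unfolding Qf_def by (rule restr) (auto simp: u_def)
    also have "\<dots> = (\<Sum>p\<in>A1. \<Sum>q\<in>A1. cnj (v p) * ?x p q * v q)"
    proof (rule sum.cong[OF refl])
      fix p assume p: "p \<in> A1"
      show "(\<Sum>q\<in>{1..k}. cnj (u p) * b p q * u q) = (\<Sum>q\<in>A1. cnj (v p) * ?x p q * v q)"
        by (rule restr) (use p F1 in \<open>auto simp: u_def A1_def blockmat_def\<close>)
    qed
    finally show ?thesis by simp
  qed
  have Q12: "(\<Sum>p\<in>A1. \<Sum>q\<in>A2. cnj (v p) * ?x p q * v q) = S * W"
    unfolding S_def W_def sum_product
    by (intro sum.cong refl) (auto simp: A1_def A2_def blockmat_def F0 algebra_simps)
  have Q21: "(\<Sum>p\<in>A2. \<Sum>q\<in>A1. cnj (v p) * ?x p q * v q) = cnj (S * W)"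
    unfolding S_def W_def complex_cnj_mult cnj_sum sum_product
    by (subst sum.swap) (auto simp: A1_def A2_def blockmat_def F0 algebra_simps intro!: sum.cong)
  have Q22: "(\<Sum>p\<in>A2. \<Sum>q\<in>A2. cnj (v p) * ?x p q * v q) = complex_of_real D"
  proof -
    have "(\<Sum>p\<in>A2. \<Sum>q\<in>A2. cnj (v p) * ?x p q * v q)
        = (\<Sum>p\<in>A2. \<Sum>q\<in>A2. if p = q then complex_of_real (d p) * (cnj (v p) * v p) else 0)"
      by (intro sum.cong refl) (auto simp: A2_def blockmat_def F0)
    also have "\<dots> = (\<Sum>p\<in>A2. complex_of_real (d p) * (cnj (v p) * v p))"
      using finA by (simp add: sum.delta)
    also have "\<dots> = complex_of_real D" unfolding D_def by (simp add: cnj_mult_self)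
    finally show ?thesis .
  qed
  have Qsplit: "(\<Sum>p\<in>F. \<Sum>q\<in>F. cnj (v p) * ?x p q * v q)
      = Qf {1..k} b u + S * W + cnj (S * W) + complex_of_real D"
    unfolding Fs(1) using finA Fs(2)
    by (simp add: sum.union_disjoint sum.distrib Q11 Q12 Q21 Q22)
  show "Im (\<Sum>p\<in>F. \<Sum>q\<in>F. cnj (v p) * ?x p q * v q) = 0"
    unfolding Qsplit using bim by simp
  have Dnn: "0 \<le> D" unfolding D_def
  proof (rule sum_nonneg)
    fix p assume "p \<in> A2"
    then have "0 < d p" using dpos' by (simp add: A2_def)
    then show "0 \<le> d p * (cmod (v p))\<^sup>2" by simp
  qed
  have Nnn: "0 \<le> N" unfolding N_def by (rule nrm_nonneg)
  have N_eq: "N = (\<Sum>p\<in>A1. (cmod (v p))\<^sup>2)"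
    unfolding N_def nrm_def by (rule restr) (auto simp: u_def A1_def)
  have cardA1: "card A1 \<le> k" using card_mono[OF _ A1sub] by simp
  have S2: "(cmod S)\<^sup>2 \<le> real k * N"
  proof -
    have "cmod S \<le> (\<Sum>p\<in>A1. cmod (v p))" unfolding S_def
      using norm_sum[of "\<lambda>p. cnj (v p)" A1] by simp
    then have "(cmod S)\<^sup>2 \<le> (\<Sum>p\<in>A1. cmod (v p))\<^sup>2" by (simp add: power_mono)
    also have "\<dots> \<le> (\<Sum>p\<in>A1. (cmod (v p))\<^sup>2) * card A1" by (rule sum_squared_le_sum_of_squares)
    also have "\<dots> \<le> N * real k" unfolding N_eq using cardA1
      by (intro mult_left_mono) (auto simp: sum_nonneg)
    finally show ?thesis by (simp add: mult.commute)
  qed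
  have gT: "(\<Sum>q\<in>A2. (cmod (c q))\<^sup>2 / d q) \<le> T"
  proof -
    have inj: "inj_on (\<lambda>q. q - k - 1) A2" by (auto simp: A2_def inj_on_def)
    have "(\<Sum>q\<in>A2. (cmod (c q))\<^sup>2 / d q) = (\<Sum>q\<in>A2. g (q - k - 1))"
      by (intro sum.cong refl) (auto simp: g_def A2_def)
    also have "\<dots> = sum g ((\<lambda>q. q - k - 1) ` A2)" using sum.reindex[OF inj, of g] by (simp add: comp_def)
    also have "\<dots> \<le> T" unfolding T_def using summ' finA gnn by (intro sum_le_suminf) auto
    finally show ?thesis .
  qed
  have W2: "(cmod W)\<^sup>2 \<le> T * D"
  proof -
    have "cmod W \<le> (\<Sum>q\<in>A2. cmod (c q) * cmod (v q))" unfolding W_def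
      using norm_sum[of "\<lambda>q. c q * v q" A2] by (simp add: norm_mult)
    also have "\<dots> = (\<Sum>q\<in>A2. (cmod (c q) / sqrt (d q)) * (sqrt (d q) * cmod (v q)))"
    proof (rule sum.cong[OF refl])
      fix q assume "q \<in> A2"
      then have "sqrt (d q) > 0" using dpos' by (simp add: A2_def)
      then show "cmod (c q) * cmod (v q) = (cmod (c q) / sqrt (d q)) * (sqrt (d q) * cmod (v q))"
        by (simp add: field_simps)
    qed
    finally have "(cmod W)\<^sup>2 \<le> (\<Sum>q\<in>A2. (cmod (c q) / sqrt (d q)) * (sqrt (d q) * cmod (v q)))\<^sup>2"
      by (simp add: power_mono)
    also have "\<dots> \<le> (\<Sum>q\<in>A2. (cmod (c q) / sqrt (d q))\<^sup>2) * (\<Sum>q\<in>A2. (sqrt (d q) * cmod (v q))\<^sup>2)"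
      by (rule Cauchy_Schwarz_ineq_sum)
    also have "(\<Sum>q\<in>A2. (cmod (c q) / sqrt (d q))\<^sup>2) = (\<Sum>q\<in>A2. (cmod (c q))\<^sup>2 / d q)"
      using dpos' by (intro sum.cong refl) (auto simp: A2_def power_divide less_imp_le)
    also have "(\<Sum>q\<in>A2. (sqrt (d q) * cmod (v q))\<^sup>2) = D"
      unfolding D_def using dpos' by (intro sum.cong refl) (auto simp: A2_def power_mult_distrib less_imp_le)
    also have "(\<Sum>q\<in>A2. (cmod (c q))\<^sup>2 / d q) * D \<le> T * D" using gT Dnn by (rule mult_right_mono)
    finally show ?thesis .
  qed
  have bQ: "real k * T * N \<le> Re (Qf {1..k} b u)" using bge unfolding N_def T_def g_def by blast
  have key: "2 * (cmod S * cmod W) \<le> real k * T * N + D"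
  proof -
    have "(2 * (cmod S * cmod W))\<^sup>2 = 4 * ((cmod S)\<^sup>2 * (cmod W)\<^sup>2)" by (simp add: power_mult_distrib)
    also have "\<dots> \<le> 4 * ((real k * N) * (T * D))"
      using S2 W2 Nnn by (intro mult_left_mono mult_mono) auto
    also have "\<dots> \<le> (real k * T * N + D)\<^sup>2"
      using sum_squares_ge_zero[of "real k * T * N - D" 0] by (simp add: power2_eq_square algebra_simps)
    finally have "(2 * (cmod S * cmod W))\<^sup>2 \<le> (real k * T * N + D)\<^sup>2" .
    moreover have "0 \<le> real k * T * N + D" using Tnn Nnn Dnn by simp
    ultimately show ?thesis by (rule power2_le_imp_le)
  qed
  have "- (cmod S * cmod W) \<le> Re (S * W)"
    using abs_Re_le_cmod[of "S * W"] by (simp add: norm_mult)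
  then show "0 \<le> Re (\<Sum>p\<in>F. \<Sum>q\<in>F. cnj (v p) * ?x p q * v q)"
    unfolding Qsplit using bQ key Dnn by simp
qed

lemma s_val_block:
  assumes "k \<ge> 1"
  shows "s_val k (blockmat k b c d) = lambda_min (upper_block k (blockmat k b c d))
           - real k * (\<Sum>l. (cmod (c (k + l + 1)))\<^sup>2 / d (k + l + 1))"
  unfolding s_val_def using assms by (simp add: blockmat_def)

lemma Qf_block: "Qf {1..k} (blockmat k b c d) v = Qf {1..k} b v"
  unfolding Qf_def blockmat_def by (intro sum.cong refl) auto

lemma Qf_minus:
  assumes "finite F" "m \<in> F"
  shows "Qf F (minus_eps_e x \<epsilon> m) v = Qf F x v - complex_of_real (\<epsilon> * (cmod (v m))\<^sup>2)"
proof -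
  have "\<And>p q. cnj (v p) * minus_eps_e x \<epsilon> m p q * v q = cnj (v p) * x p q * v q
      - (if p = m then (if q = m then complex_of_real \<epsilon> * (cnj (v m) * v m) else 0) else 0)"
    by (auto simp: minus_eps_e_def e_unit_def algebra_simps)
  moreover have "(\<Sum>p\<in>F. \<Sum>q\<in>F. if p = m then (if q = m then complex_of_real \<epsilon> * (cnj (v m) * v m) else 0) else 0)
      = complex_of_real \<epsilon> * (cnj (v m) * v m)" (is "?L = ?X")
  proof -
    have "?L = (\<Sum>p\<in>F. if p = m then ?X else 0)"
      by (intro sum.cong refl) (auto simp: sum.delta assms)
    then show ?thesis using assms by (simp add: sum.delta)
  qed
  ultimately have "Qf F (minus_eps_e x \<epsilon> m) v = Qf F x v - complex_of_real \<epsilon> * (cnj (v m) * v m)"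
    unfolding Qf_def by (simp only: sum_subtractf)
  then show ?thesis by (simp add: cnj_mult_self)
qed

lemma upper_block_d: "upper_block k (blockmat k b c d) = upper_block k (blockmat k b c d')"
  unfolding upper_block_def blockmat_def by (rule cong_mat) auto

theorem lemma3p3:
  fixes k :: nat and a :: imat
  assumes "k \<ge> 1" and "in_S k a"
  shows "(s_val k a \<ge> 0 \<longrightarrow>
            (\<forall>\<epsilon>::real. 0 \<le> \<epsilon> \<and> \<epsilon> \<le> s_val k a \<longrightarrow>
               (\<forall>m. 1 \<le> m \<and> m \<le> k \<longrightarrow> formally_psd (minus_eps_e a \<epsilon> m))))
       \<and> (s_val k a \<ge> 0 \<longrightarrow> formally_psd a)
       \<and> (s_val k a > 0 \<longrightarrow>
            (\<forall>m\<ge>1. \<exists>\<epsilon>::real. \<epsilon> > 0 \<and> s_val k (minus_eps_e a \<epsilon> m) > 0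
                                \<and> formally_psd (minus_eps_e a \<epsilon> m)))"
proof -
  obtain b c d where bpsd: "psd_on {1..k} b" and dpos: "\<forall>l\<ge>1. d (k + l) > 0"
    and summ: "summable (\<lambda>l. (cmod (c (k + l + 1)))\<^sup>2 / d (k + l + 1))"
    and a: "a = blockmat k b c d"
    using assms(2) unfolding in_S_def by blast
  define T where "T = (\<Sum>l. (cmod (c (k + l + 1)))\<^sup>2 / d (k + l + 1))"
  define lam where "lam = lambda_min (upper_block k a)"
  have sv: "s_val k a = lam - real k * T"
    using s_val_block[OF assms(1), of b c d] unfolding a lam_def T_def by simp
  have bim: "\<forall>u. Im (Qf {1..k} b u) = 0" using bpsd unfolding psd_on_def Qf_def by blast
  have aim: "\<forall>u. Im (Qf {1..k} a u) = 0" using bim unfolding a Qf_block by simp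
  obtain l0 where lam: "\<forall>v. lam * nrm {1..k} v \<le> Re (Qf {1..k} a v)"
    using eigen_char[OF assms(1) aim] unfolding lam_def by blast
  have lamb: "lam * nrm {1..k} v \<le> Re (Qf {1..k} b v)" for v
    using lam unfolding a Qf_block by blast
  have eqm: "minus_eps_e a \<epsilon> m = blockmat k (minus_eps_e b \<epsilon> m) c d" if "1 \<le> m" "m \<le> k" for \<epsilon> m
    unfolding a using that by (auto simp: minus_eps_e_def blockmat_def e_unit_def fun_eq_iff)
  have partI: "formally_psd (minus_eps_e a \<epsilon> m)"
    if e1: "0 \<le> \<epsilon>" and e2: "\<epsilon> \<le> s_val k a" and m1: "1 \<le> m" and m2: "m \<le> k" for \<epsilon> m
  proof -
    have mF: "m \<in> {1..k}" using m1 m2 by simp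
    show ?thesis unfolding eqm[OF m1 m2]
    proof (rule block_psd[OF dpos summ])
      show "\<forall>u. Im (Qf {1..k} (minus_eps_e b \<epsilon> m) u) = 0" using bim Qf_minus[OF _ mF] by simp
      show "\<forall>u. real k * (\<Sum>l. (cmod (c (k + l + 1)))\<^sup>2 / d (k + l + 1)) * nrm {1..k} u
                  \<le> Re (Qf {1..k} (minus_eps_e b \<epsilon> m) u)"
      proof
        fix u
        have "(cmod (u m))\<^sup>2 \<le> nrm {1..k} u" unfolding nrm_def using mF by (intro member_le_sum) auto
        then have h1: "\<epsilon> * (cmod (u m))\<^sup>2 \<le> \<epsilon> * nrm {1..k} u" using e1 by (rule mult_left_mono)
        have "real k * T \<le> lam - \<epsilon>" using e2 sv by simp
        then have h2: "real k * T * nrm {1..k} u \<le> (lam - \<epsilon>) * nrm {1..k} u"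
          using nrm_nonneg by (rule mult_right_mono)
        show "real k * (\<Sum>l. (cmod (c (k + l + 1)))\<^sup>2 / d (k + l + 1)) * nrm {1..k} u
                  \<le> Re (Qf {1..k} (minus_eps_e b \<epsilon> m) u)"
        proof -
          have h3: "Re (Qf {1..k} (minus_eps_e b \<epsilon> m) u) = Re (Qf {1..k} b u) - \<epsilon> * (cmod (u m))\<^sup>2"
            using Qf_minus[OF _ mF, of b \<epsilon> u] by simp
          have "real k * T * nrm {1..k} u \<le> Re (Qf {1..k} (minus_eps_e b \<epsilon> m) u)"
            using h1 h2 lamb[of u] h3 unfolding left_diff_distrib by linarith
          then show ?thesis by (simp add: T_def)
        qed
      qed
    qed
  qed
  have partII: "formally_psd a" if "s_val k a \<ge> 0"
  proof -
    have "minus_eps_e a 0 1 = a" by (simp add: minus_eps_e_def fun_eq_iff)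
    then show ?thesis using partI[of 0 1] that assms(1) by simp
  qed
  have partIII: "\<exists>\<epsilon>::real. \<epsilon> > 0 \<and> s_val k (minus_eps_e a \<epsilon> m) > 0 \<and> formally_psd (minus_eps_e a \<epsilon> m)"
    if spos: "s_val k a > 0" and m1: "m \<ge> 1" for m
  proof (cases "m \<le> k")
    case True
    define \<epsilon> where "\<epsilon> = s_val k a / 2"
    have mF: "m \<in> {1..k}" using m1 True by simp
    let ?a' = "minus_eps_e a \<epsilon> m"
    have a'im: "\<forall>u. Im (Qf {1..k} ?a' u) = 0"
      using aim Qf_minus[OF _ mF, of a \<epsilon>] by simp
    obtain l' where l'1: "nrm {1..k} l' = 1" and l'2: "Re (Qf {1..k} ?a' l') = lambda_min (upper_block k ?a')"
      using eigen_char[OF assms(1) a'im] by blast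
    have "(cmod (l' m))\<^sup>2 \<le> nrm {1..k} l'" unfolding nrm_def using mF by (intro member_le_sum) auto
    then have "\<epsilon> * (cmod (l' m))\<^sup>2 \<le> \<epsilon>" using l'1 spos by (simp add: \<epsilon>_def)
    moreover have "lam \<le> Re (Qf {1..k} a l')" using lam l'1 by (metis mult.right_neutral)
    ultimately have "lam - \<epsilon> \<le> lambda_min (upper_block k ?a')"
      using l'2 Qf_minus[OF _ mF, of a \<epsilon> l'] by simp
    moreover have "s_val k ?a' = lambda_min (upper_block k ?a') - real k * T"
      unfolding eqm[OF m1 True] using s_val_block[OF assms(1), of "minus_eps_e b \<epsilon> m" c d]
      unfolding T_def eqm[OF m1 True, symmetric] by simp
    ultimately have "s_val k ?a' \<ge> s_val k a - \<epsilon>" using sv by linarith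
    then have "s_val k ?a' > 0" using spos unfolding \<epsilon>_def by linarith
    moreover have "formally_psd ?a'" using partI[OF _ _ m1 True, of \<epsilon>] spos by (simp add: \<epsilon>_def)
    moreover have "\<epsilon> > 0" using spos by (simp add: \<epsilon>_def)
    ultimately show ?thesis by blast
  next
    case False
    then have mk: "k < m" by simp
    define l0 where "l0 = m - k - 1"
    have m_eq: "k + l0 + 1 = m" using mk by (simp add: l0_def)
    define \<delta> where "\<delta> = d m"
    have \<delta>pos: "\<delta> > 0" using dpos[rule_format, of "m - k"] mk by (simp add: \<delta>_def)
    define c0 where "c0 = (cmod (c m))\<^sup>2"
    have c0nn: "c0 \<ge> 0" by (simp add: c0_def)
    define s where "s = s_val k a"
    have spos': "s > 0" using spos by (simp add: s_def)
    have kpos: "real k > 0" using assms(1) by simp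
    define \<epsilon> where "\<epsilon> = min (\<delta>/2) (s * \<delta>\<^sup>2 / (4 * real k * (c0 + 1)))"
    have \<epsilon>pos: "\<epsilon> > 0" using \<delta>pos spos' kpos c0nn by (simp add: \<epsilon>_def)
    have \<epsilon>le1: "\<epsilon> \<le> \<delta>/2" and \<epsilon>le2: "\<epsilon> \<le> s * \<delta>\<^sup>2 / (4 * real k * (c0 + 1))"
      by (simp_all add: \<epsilon>_def)
    define d' where "d' = d(m := \<delta> - \<epsilon>)"
    have eqa: "minus_eps_e a \<epsilon> m = blockmat k b c d'"
      unfolding a d'_def \<delta>_def using mk m1
      by (auto simp: minus_eps_e_def blockmat_def e_unit_def fun_eq_iff)
    have d'pos: "\<forall>l\<ge>1. d' (k + l) > 0"
      using dpos \<delta>pos \<epsilon>le1 by (auto simp: d'_def)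
    define g where "g l = (cmod (c (k + l + 1)))\<^sup>2 / d (k + l + 1)" for l
    define X where "X = c0 / (\<delta> - \<epsilon>) - c0 / \<delta>"
    have g'eq: "(\<lambda>l. (cmod (c (k + l + 1)))\<^sup>2 / d' (k + l + 1)) = (\<lambda>l. g l + (if l = l0 then X else 0))"
    proof
      fix l
      show "(cmod (c (k + l + 1)))\<^sup>2 / d' (k + l + 1) = g l + (if l = l0 then X else 0)"
      proof (cases "l = l0")
        case True
        then show ?thesis using m_eq by (simp add: d'_def g_def X_def c0_def \<delta>_def)
      next
        case False
        then have "k + l + 1 \<noteq> m" using m_eq by auto
        then show ?thesis using False by (simp add: d'_def g_def)
      qed
    qed
    have summg: "summable g" using summ by (simp add: g_def[abs_def])
    have sums': "(\<lambda>l. g l + (if l = l0 then X else 0)) sums (T + X)"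
    proof (rule sums_add)
      show "g sums T" using summg by (simp add: T_def g_def[abs_def] summable_sums)
      show "(\<lambda>l. if l = l0 then X else 0) sums X" using sums_single[of l0 "\<lambda>_. X"] by simp
    qed
    have summ': "summable (\<lambda>l. (cmod (c (k + l + 1)))\<^sup>2 / d' (k + l + 1))"
      unfolding g'eq using sums' by (rule sums_summable)
    have T': "(\<Sum>l. (cmod (c (k + l + 1)))\<^sup>2 / d' (k + l + 1)) = T + X"
      unfolding g'eq using sums' by (rule sums_unique[symmetric])
    have Xb: "real k * X \<le> s / 2"
    proof -
      have de: "\<delta> - \<epsilon> \<ge> \<delta> / 2" using \<epsilon>le1 by simp
      have de0: "\<delta> - \<epsilon> > 0" using de \<delta>pos by simp
      have hX: "X = c0 * \<epsilon> / (\<delta> * (\<delta> - \<epsilon>))" using \<delta>pos de0 by (simp add: X_def field_simps)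
      have "\<delta> * (\<delta> / 2) \<le> \<delta> * (\<delta> - \<epsilon>)" using de \<delta>pos by (intro mult_left_mono) auto
      then have dd: "\<delta>\<^sup>2 / 2 \<le> \<delta> * (\<delta> - \<epsilon>)" by (simp add: power2_eq_square)
      have "X \<le> c0 * \<epsilon> / (\<delta>\<^sup>2 / 2)" unfolding hX
        using dd \<delta>pos c0nn \<epsilon>pos de0 by (intro divide_left_mono) (auto intro!: mult_pos_pos)
      also have "\<dots> = 2 * c0 * \<epsilon> / \<delta>\<^sup>2" by simp
      also have "\<dots> \<le> 2 * c0 * (s * \<delta>\<^sup>2 / (4 * real k * (c0 + 1))) / \<delta>\<^sup>2"
        using \<epsilon>le2 c0nn \<delta>pos by (intro divide_right_mono mult_left_mono) auto
      also have "\<dots> = s * c0 / (2 * real k * (c0 + 1))"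
      proof -
        have n1: "4 * real k * (c0 + 1) \<noteq> 0" "2 * real k * (c0 + 1) \<noteq> 0" "\<delta>\<^sup>2 \<noteq> 0"
          using \<delta>pos c0nn kpos by auto
        show ?thesis using n1 by (simp add: divide_simps)
      qed
      finally have "real k * X \<le> real k * (s * c0 / (2 * real k * (c0 + 1)))"
        using kpos by (intro mult_left_mono) auto
      also have "\<dots> = (s / 2) * (c0 / (c0 + 1))"
      proof -
        have n2: "2 * real k * (c0 + 1) \<noteq> 0" "c0 + 1 \<noteq> 0" "real k \<noteq> 0" using c0nn kpos by auto
        show ?thesis using n2 by (simp add: divide_simps)
      qed
      also have "\<dots> \<le> (s / 2) * 1" using spos' c0nn by (intro mult_left_mono) auto
      finally show ?thesis by simp
    qed
    have lam': "lambda_min (upper_block k (blockmat k b c d')) = lam"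
      unfolding lam_def a using upper_block_d[of k b c d d'] by simp
    have sv': "s_val k (minus_eps_e a \<epsilon> m) = lam - real k * (T + X)"
      unfolding eqa using s_val_block[OF assms(1), of b c d'] lam' T' by simp
    have s'pos: "s_val k (minus_eps_e a \<epsilon> m) > 0"
      using sv' Xb sv spos' unfolding s_def by (simp add: algebra_simps)
    have psd': "formally_psd (minus_eps_e a \<epsilon> m)"
      unfolding eqa
    proof (rule block_psd[OF d'pos summ'])
      show "\<forall>u. Im (Qf {1..k} b u) = 0" by (rule bim)
      show "\<forall>u. real k * (\<Sum>l. (cmod (c (k + l + 1)))\<^sup>2 / d' (k + l + 1)) * nrm {1..k} u
                  \<le> Re (Qf {1..k} b u)"
      proof
        fix u
        have "real k * (T + X) \<le> lam" using s'pos sv' by simp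
        then have "real k * (T + X) * nrm {1..k} u \<le> lam * nrm {1..k} u"
          using nrm_nonneg by (rule mult_right_mono)
        then show "real k * (\<Sum>l. (cmod (c (k + l + 1)))\<^sup>2 / d' (k + l + 1)) * nrm {1..k} u
                  \<le> Re (Qf {1..k} b u)" using lamb[of u] T' by simp
      qed
    qed
    show ?thesis using \<epsilon>pos s'pos psd' by blast
  qed
  show ?thesis using partI partII partIII by blast
qed

end
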